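(* Let $\mathcal{M}$, $f,h_1,h_2,\psi$ be as in the context, and let $\{(x_k,y_k,z_k,\lambda_k,\gamma_k,\sigma_k)\}$ be any sequence generated by Algorithm ALM described in the context (i.e., at every iteration a point $x_k$ satisfying the subproblem conditions is found). Then $$\lim_{k\to\infty}\big(\|h_1(x_k)-y_k\|_2+\|h_2(x_k)-z_k\|_2\big)=0.$$ Consequently, if $x_*\in\mathcal{M}$ is an accumulation point of $\{x_k\}$, then $(x_*,h_1(x_* ),h_2(x_* ))$ is a feasible accumulation point of $\{(x_k,y_k,z_k)\}$ (feasible meaning $h_2(x_* )\le 0$). Moreover, $\{x_k\}$ always has an accumulation point if $\mathcal{M}$ is compact.
   Context: Standing assumptions: $\mathcal{M}$ is a complete smooth Riemannian manifold; $f:\mathcal{M}\to\mathbb{R}$, $h_1:\mathcal{M}\to\mathbb{R}^m$, $h_2:\mathcal{M}\to\mathbb{R}^q$ are continuously differentiable; $\psi:\mathbb{R}^m\to\mathbb{R}$ is convex; and $f(x)+\psi(y)$ is bounded below on $\mathcal{M}\times\mathbb{R}^m$. The problem is $\min\{f(x)+\psi(h_1(x))\}$ s.t. $x\in\mathcal{M}$, $h_2(x)\le 0$, reformulated as $\min f(x)+\psi(y)$ s.t. $x\in\mathcal{M}$, $y=h_1(x)$, $z=h_2(x)$, $z\le 0$. For a closed proper convex $g$ on $\mathbb{R}^n$ and $\sigma>0$: $g^\sigma(u):=\min_w\{g(w)+\frac{\sigma}{2}\|u-w\|_2^2\}$ (Moreau–Yosida regularization) and $\mathrm{prox}_{g/\sigma}(u):=\arg\min_w\{g(w)+\frac{\sigma}{2}\|u-w\|_2^2\}$.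 $\delta_{\mathbb{R}^q_-}$ is the indicator of $\mathbb{R}^q_-=\{z\le 0\}$ and $\Pi_{\mathbb{R}^q_-}$ the Euclidean projection onto it. The augmented Lagrangian is $L_\sigma(x,y,z,\lambda,\gamma)=f(x)+\psi(y)+\frac{\sigma}{2}\|h_1(x)-y+\lambda/\sigma\|_2^2+\frac{\sigma}{2}\|h_2(x)-z+\gamma/\sigma\|_2^2-\frac{\|\lambda\|_2^2+\|\gamma\|_2^2}{2\sigma}$. Algorithm ALM: choose $x_0\in\mathcal{M}$, $\gamma_0\in\mathbb{R}^q_+$, $\lambda_0\in\mathbb{R}^m$, $\sigma_0>0$, $\alpha,\tau\in(0,1)$, $\rho>1$, and a sequence $\varepsilon_k\ge 0$ with $\varepsilon_k\to 0$. Let $y_0=\mathrm{prox}_{\psi/\sigma_0}(h_1(x_0)+\lambda_0/\sigma_0)$, $z_0=\Pi_{\mathbb{R}^q_-}(h_2(x_0)+\gamma_0/\sigma_0)$, $\delta_0=\max\{\|h_1(x_0)-y_0\|_2,\|h_2(x_0)-z_0\|_2\}$. Choose a feasible $x_{\rm feas}\in\mathcal{M}$ ($h_2(x_{\rm feas})\le0$) and $\Phi\ge\max\{f(x_{\rm feas})+\psi(h_1(x_{\rm feas})),L_{\sigma_0}(x_0,y_0,z_0,\lambda_0,\gamma_0)\}$. For $k=1,2,\dots$ (with current values $\lambda_k,\gamma_k,\sigma_k$; at $k=1$ these are $\lambda_0,\gamma_0,\sigma_0$): (i) find $x_k\in\mathcal{M}$ with $\|\mathrm{grad}\,L_k(x_k)\|<\varepsilon_k$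 and $L_k(x_k)\le\Phi$, where $L_k(x)=f(x)+\psi^{\sigma_k}(h_1(x)+\lambda_k/\sigma_k)+\delta^{\sigma_k}_{\mathbb{R}^q_-}(h_2(x)+\gamma_k/\sigma_k)$ and $\mathrm{grad}$ is the Riemannian gradient; (ii) $y_k=\mathrm{prox}_{\psi/\sigma_k}(h_1(x_k)+\lambda_k/\sigma_k)$, $z_k=\Pi_{\mathbb{R}^q_-}(h_2(x_k)+\gamma_k/\sigma_k)$; (iii) $\lambda_{k+1}=\lambda_k+\sigma_k(h_1(x_k)-y_k)$, $\gamma_{k+1}=\gamma_k+\sigma_k(h_2(x_k)-z_k)$; (iv) $\delta_k=\max\{\|h_1(x_k)-y_k\|_2,\|h_2(x_k)-z_k\|_2\}$; if $\delta_k\le\tau\delta_{k-1}$ then $\sigma_{k+1}=\sigma_k$, otherwise $\sigma_{k+1}=\max\{\rho\sigma_k,\|\lambda_{k+1}\|_2^{1+\alpha},\|\gamma_{k+1}\|_2^{1+\alpha}\}$. *)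

theory Defs
  imports "HOL-Analysis.Analysis"
begin

definition nonpos_orthant :: "(real^'q) set" where
  "nonpos_orthant = {z. \<forall>i. z $ i \<le> 0}"

text \<open>Moreau-Yosida regularization of a closed proper convex function whose effective
  domain is C (g is +infinity outside C, so the minimum ranges over C):
  g^sigma(u) = min_w { g w + sigma/2 * norm(u - w)^2 }.
  For psi (real valued) C = UNIV; for the indicator of R^q_- take C = nonpos_orthant, g = 0.\<close>
definition moreau_env :: "'n::real_normed_vector set \<Rightarrow> ('n \<Rightarrow> real) \<Rightarrow> real \<Rightarrow> 'n \<Rightarrow> real" where
  "moreau_env C g \<sigma> u = (INF w\<in>C. g w + \<sigma> / 2 * (norm (u - w))\<^sup>2)"

definition prox :: "'n::real_normed_vector set \<Rightarrow> ('n \<Rightarrow> real) \<Rightarrow> real \<Rightarrow> 'n \<Rightarrow> 'n" where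
  "prox C g \<sigma> u = (THE w. w \<in> C \<and>
      (\<forall>v\<in>C. g w + \<sigma> / 2 * (norm (u - w))\<^sup>2 \<le> g v + \<sigma> / 2 * (norm (u - v))\<^sup>2))"

definition aug_lag ::
  "('a \<Rightarrow> real) \<Rightarrow> (real^'m \<Rightarrow> real) \<Rightarrow> ('a \<Rightarrow> real^'m) \<Rightarrow> ('a \<Rightarrow> real^'q)
    \<Rightarrow> real \<Rightarrow> 'a \<Rightarrow> real^'m \<Rightarrow> real^'q \<Rightarrow> real^'m \<Rightarrow> real^'q \<Rightarrow> real" where
  "aug_lag f \<psi> h1 h2 \<sigma> x y z lm gm =
     f x + \<psi> y + \<sigma> / 2 * (norm (h1 x - y + lm /\<^sub>R \<sigma>))\<^sup>2
       + \<sigma> / 2 * (norm (h2 x - z + gm /\<^sub>R \<sigma>))\<^sup>2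
       - ((norm lm)\<^sup>2 + (norm gm)\<^sup>2) / (2 * \<sigma>)"

definition sub_obj ::
  "('a \<Rightarrow> real) \<Rightarrow> (real^'m \<Rightarrow> real) \<Rightarrow> ('a \<Rightarrow> real^'m) \<Rightarrow> ('a \<Rightarrow> real^'q)
    \<Rightarrow> real \<Rightarrow> real^'m \<Rightarrow> real^'q \<Rightarrow> 'a \<Rightarrow> real" where
  "sub_obj f \<psi> h1 h2 \<sigma> lm gm x =
     f x + moreau_env UNIV \<psi> \<sigma> (h1 x + lm /\<^sub>R \<sigma>)
         + moreau_env nonpos_orthant (\<lambda>_. 0) \<sigma> (h2 x + gm /\<^sub>R \<sigma>)"

definition acc_point :: "(nat \<Rightarrow> 'a::topological_space) \<Rightarrow> 'a \<Rightarrow> bool" where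
  "acc_point s l \<longleftrightarrow> (\<exists>r. strict_mono r \<and> (s \<circ> r) \<longlonglongrightarrow> l)"

end

theory Submission
  imports Defs
begin

lemma parallelo:
  fixes a b :: "'n::real_inner"
  shows "(norm ((1/2) *\<^sub>R a + (1/2) *\<^sub>R b))\<^sup>2 = ((norm a)\<^sup>2 + (norm b)\<^sup>2)/2 - (norm (a - b))\<^sup>2 / 4"
  by (simp add: power2_norm_eq_inner inner_add_left inner_add_right inner_diff_left inner_diff_right inner_commute algebra_simps) (simp add: field_simps)

lemma prox_min:
  fixes \<psi> :: "real^'m \<Rightarrow> real"
  assumes cv: "convex_on UNIV \<psi>" and lb: "\<forall>v. b \<le> \<psi> v" and sp: "\<sigma> > 0"
  shows "\<forall>v. \<psi> (prox UNIV \<psi> \<sigma> u) + \<sigma>/2*(norm(u - prox UNIV \<psi> \<sigma> u))\<^sup>2 \<le> \<psi> v + \<sigma>/2*(norm(u-v))\<^sup>2"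
proof -
  define g where "g w = \<psi> w + \<sigma>/2*(norm(u-w))\<^sup>2" for w
  have cpsi: "continuous_on UNIV \<psi>" using convex_on_continuous[OF open_UNIV cv] .
  have cg: "continuous_on A g" for A unfolding g_def
    by (intro continuous_intros continuous_on_subset[OF cpsi]) auto
  define R where "R = sqrt (2 * (\<psi> u - b) / \<sigma>)"
  have R0: "0 \<le> R" unfolding R_def using lb sp by (simp add: less_imp_le)
  obtain w where wA: "w \<in> cball u R" and wmin: "\<forall>v\<in>cball u R. g w \<le> g v"
    using continuous_attains_inf[OF compact_cball _ cg, of u R] R0 by auto
  have gu: "g u = \<psi> u" by (simp add: g_def)
  have wglob: "g w \<le> g v" for v
  proof (cases "v \<in> cball u R")
    case True then show ?thesis using wmin by auto
  next
    case False
    then have "R < norm (u - v)" by (simp add: dist_norm)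
    have "R\<^sup>2 < (norm (u - v))\<^sup>2" using \<open>R < norm (u - v)\<close> R0
      by (simp add: power_strict_mono)
    moreover have "R\<^sup>2 = 2 * (\<psi> u - b) / \<sigma>" unfolding R_def using lb sp by simp
    ultimately have "\<psi> u - b < \<sigma>/2 * (norm (u - v))\<^sup>2" using sp
      by (simp add: field_simps)
    then have "g u < g v" using lb gu unfolding g_def by (smt (verit))
    moreover have "u \<in> cball u R" using R0 by simp
    moreover have "g w \<le> g u" using wmin R0 by simp
    ultimately show ?thesis by linarith
  qed
  have uniq: "w' = w" if "\<forall>v. g w' \<le> g v" for w'
  proof (rule ccontr)
    assume ne: "w' \<noteq> w"
    define m where "m = (1/2) *\<^sub>R w + (1/2) *\<^sub>R w'"
    have c1: "\<psi> m \<le> (1/2) * \<psi> w + (1/2) * \<psi> w'"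
      unfolding m_def using convex_onD[OF cv, of "1/2" w w'] by simp
    have "(1/2) *\<^sub>R (u - w) + (1/2) *\<^sub>R (u - w') = (1/2) *\<^sub>R (u + u) - m" unfolding m_def
      by (simp add: scaleR_diff_right scaleR_add_right)
    then have "u - m = (1/2) *\<^sub>R (u - w) + (1/2) *\<^sub>R (u - w')" by simp
    then have c2: "(norm (u - m))\<^sup>2 = ((norm (u-w))\<^sup>2 + (norm (u-w'))\<^sup>2)/2 - (norm (w' - w))\<^sup>2 / 4"
      using parallelo[of "u - w" "u - w'"] by simp
    have "norm (w' - w) > 0" using ne by simp
    then have "(norm (w' - w))\<^sup>2 > 0" by simp
    have c3: "\<sigma> * (norm (u-m))\<^sup>2 = \<sigma>*((norm(u-w))\<^sup>2+(norm(u-w'))\<^sup>2)/2 - \<sigma>*(norm(w'-w))\<^sup>2/4"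
      using c2 by (simp add: right_diff_distrib)
    have c4: "\<sigma>*(norm(w'-w))\<^sup>2 > 0" using sp \<open>(norm (w' - w))\<^sup>2 > 0\<close> by simp
    have "g m < (g w + g w')/2" unfolding g_def using c1 c3 c4 by (simp add: field_simps)
    moreover have "g w \<le> g m" "g w' \<le> g m" using wglob that by auto
    ultimately show False by simp
  qed
  have "prox UNIV \<psi> \<sigma> u = w" unfolding prox_def
    apply (rule the_equality)
    using wglob uniq unfolding g_def by auto
  then show ?thesis using wglob unfolding g_def by auto
qed

theorem theorem3p1:
  fixes f :: "'a::complete_space \<Rightarrow> real"
    and h1 :: "'a \<Rightarrow> real^'m" and h2 :: "'a \<Rightarrow> real^'q"
    and \<psi> :: "real^'m \<Rightarrow> real"
    and gradnorm :: "('a \<Rightarrow> real) \<Rightarrow> 'a \<Rightarrow> real"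
    and x :: "nat \<Rightarrow> 'a" and y lam :: "nat \<Rightarrow> real^'m" and z gam :: "nat \<Rightarrow> real^'q"
    and sig eps delta :: "nat \<Rightarrow> real"
    and \<alpha> \<tau> \<rho> \<Phi> :: real and x_feas :: 'a
  assumes cont_f: "continuous_on UNIV f"
    and cont_h1: "continuous_on UNIV h1"
    and cont_h2: "continuous_on UNIV h2"
    and convex_psi: "convex_on UNIV \<psi>"
    and bdd: "\<exists>B. \<forall>u v. B \<le> f u + \<psi> v"
    \<comment> \<open>parameters\<close>
    and gam0: "\<forall>i. gam 0 $ i \<ge> 0"
    and sig0: "sig 0 > 0"
    and alpha: "0 < \<alpha>" "\<alpha> < 1"
    and tau: "0 < \<tau>" "\<tau> < 1"
    and rho: "\<rho> > 1"
    and eps_nonneg: "\<forall>k. eps k \<ge> 0"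
    and eps_lim: "eps \<longlonglongrightarrow> 0"
    \<comment> \<open>initialisation\<close>
    and y0: "y 0 = prox UNIV \<psi> (sig 0) (h1 (x 0) + lam 0 /\<^sub>R sig 0)"
    and z0: "z 0 = closest_point nonpos_orthant (h2 (x 0) + gam 0 /\<^sub>R sig 0)"
    and feas: "h2 x_feas \<in> nonpos_orthant"
    and Phi: "\<Phi> \<ge> f x_feas + \<psi> (h1 x_feas)"
             "\<Phi> \<ge> aug_lag f \<psi> h1 h2 (sig 0) (x 0) (y 0) (z 0) (lam 0) (gam 0)"
    \<comment> \<open>at k = 1 the current multipliers/penalty are the initial ones\<close>
    and init1: "lam 1 = lam 0" "gam 1 = gam 0" "sig 1 = sig 0"
    \<comment> \<open>delta_k for all k (including k = 0)\<close>
    and delta_def: "\<forall>k. delta k = max (norm (h1 (x k) - y k)) (norm (h2 (x k) - z k))"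
    \<comment> \<open>iterations k \<ge> 1\<close>
    and step_i: "\<forall>k\<ge>1. gradnorm (sub_obj f \<psi> h1 h2 (sig k) (lam k) (gam k)) (x k) < eps k
                    \<and> sub_obj f \<psi> h1 h2 (sig k) (lam k) (gam k) (x k) \<le> \<Phi>"
    and step_ii: "\<forall>k\<ge>1. y k = prox UNIV \<psi> (sig k) (h1 (x k) + lam k /\<^sub>R sig k)
                     \<and> z k = closest_point nonpos_orthant (h2 (x k) + gam k /\<^sub>R sig k)"
    and step_iii: "\<forall>k\<ge>1. lam (Suc k) = lam k + sig k *\<^sub>R (h1 (x k) - y k)
                      \<and> gam (Suc k) = gam k + sig k *\<^sub>R (h2 (x k) - z k)"
    and step_iv: "\<forall>k\<ge>1. sig (Suc k) =
                    (if delta k \<le> \<tau> * delta (k - 1) then sig k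
                     else max (\<rho> * sig k)
                            (max (norm (lam (Suc k)) powr (1 + \<alpha>)) (norm (gam (Suc k)) powr (1 + \<alpha>))))"
  shows "((\<lambda>k. norm (h1 (x k) - y k) + norm (h2 (x k) - z k)) \<longlonglongrightarrow> 0)
       \<and> (\<forall>xs. acc_point x xs \<longrightarrow>
            acc_point (\<lambda>k. (x k, y k, z k)) (xs, h1 xs, h2 xs) \<and> h2 xs \<in> nonpos_orthant)
       \<and> (compact (UNIV :: 'a set) \<longrightarrow> (\<exists>xs. acc_point x xs))"
proof -
  obtain B where B: "\<forall>u v. B \<le> f u + \<psi> v" using bdd by blast
  define C where "C = \<Phi> - B"
  have C0: "0 \<le> C" using B Phi(1) unfolding C_def by (smt (verit))
  have psilb: "\<forall>v. B - f x_feas \<le> \<psi> v" using B by (smt (verit))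
  define Ort where "Ort = (nonpos_orthant :: (real^'q) set)"
  have clOrt: "closed Ort" unfolding Ort_def nonpos_orthant_def
    by (intro closed_Collect_all closed_halfspace_component_le_cart)
  have neOrt: "Ort \<noteq> {}" unfolding Ort_def nonpos_orthant_def by (rule ccontr) (auto dest: spec[of _ 0])
  have grow: "sig (Suc k) = sig k \<or> (\<not> delta k \<le> \<tau> * delta (k - 1) \<and> sig (Suc k) \<ge> \<rho> * sig k)"
    if "k \<ge> 1" for k
    using step_iv that by (cases "delta k \<le> \<tau> * delta (k - 1)") auto
  have sigpos: "sig k > 0" for k
  proof (induction k)
    case 0 then show ?case using sig0 .
  next
    case (Suc k)
    show ?case
    proof (cases "k = 0")
      case True then show ?thesis using init1 sig0 by simp
    next
      case False
      then have "k \<ge> 1" by simp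
      have "\<rho> * sig k > 0" using Suc.IH rho by simp
      then show ?thesis using grow[OF \<open>k \<ge> 1\<close>] Suc.IH by auto
    qed
  qed
  have incS: "sig k \<le> sig (Suc k)" for k
  proof (cases "k = 0")
    case True then show ?thesis using init1 by simp
  next
    case False
    then have "k \<ge> 1" by simp
    have "\<rho> * sig k \<ge> sig k" using sigpos[of k] rho by simp
    then show ?thesis using grow[OF \<open>k \<ge> 1\<close>] by auto
  qed
  have inc: "incseq sig" using incS by (simp add: incseq_SucI)
  have dnn: "delta k \<ge> 0" for k using delta_def by (simp add: le_max_iff_disj)
  have mult_bd: "(norm (lam (Suc k)))\<^sup>2 \<le> 2 * C * sig k \<and> (norm (gam (Suc k)))\<^sup>2 \<le> 2 * C * sig k"
    if k1: "k \<ge> 1" for k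
  proof -
    let ?s = "sig k"
    have sp: "?s > 0" by (rule sigpos)
    define u where "u = h1 (x k) + lam k /\<^sub>R ?s"
    define v where "v = h2 (x k) + gam k /\<^sub>R ?s"
    have yk: "y k = prox UNIV \<psi> ?s u" and zk: "z k = closest_point Ort v"
      using step_ii k1 unfolding u_def v_def Ort_def by auto
    have l1: "lam (Suc k) = lam k + ?s *\<^sub>R (h1 (x k) - y k)"
      and g1: "gam (Suc k) = gam k + ?s *\<^sub>R (h2 (x k) - z k)" using step_iii k1 by auto
    have uy: "u - y k = lam (Suc k) /\<^sub>R ?s" unfolding l1 u_def using sp
      by (simp add: scaleR_add_right algebra_simps)
    have vz: "v - z k = gam (Suc k) /\<^sub>R ?s" unfolding g1 v_def using sp
      by (simp add: scaleR_add_right algebra_simps)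
    have pm: "\<forall>w. \<psi> (y k) + ?s/2*(norm(u - y k))\<^sup>2 \<le> \<psi> w + ?s/2*(norm(u-w))\<^sup>2"
      using prox_min[OF convex_psi psilb sp, of u] yk by simp
    have me1: "moreau_env UNIV \<psi> ?s u \<ge> \<psi> (y k) + ?s/2*(norm(u - y k))\<^sup>2"
      unfolding moreau_env_def by (rule cINF_greatest) (use pm in auto)
    have zin: "z k \<in> Ort" using closest_point_in_set[OF clOrt neOrt] zk by simp
    have cpl: "\<forall>w\<in>Ort. norm (v - z k) \<le> norm (v - w)"
      using closest_point_le[OF clOrt] zk by (simp add: dist_norm)
    have me2: "moreau_env nonpos_orthant (\<lambda>_. 0) ?s v \<ge> ?s/2*(norm(v - z k))\<^sup>2"
      unfolding moreau_env_def Ort_def[symmetric]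
    proof (rule cINF_greatest)
      show "Ort \<noteq> {}" by (rule neOrt)
      fix w assume "w \<in> Ort"
      then have "(norm (v - z k))\<^sup>2 \<le> (norm (v - w))\<^sup>2" using cpl by (simp add: power_mono)
      then show "?s/2*(norm(v - z k))\<^sup>2 \<le> 0 + ?s/2*(norm(v - w))\<^sup>2" using sp by simp
    qed
    have so: "sub_obj f \<psi> h1 h2 ?s (lam k) (gam k) (x k) \<le> \<Phi>" using step_i k1 by auto
    then have "f (x k) + \<psi> (y k) + ?s/2*(norm(u - y k))\<^sup>2 + ?s/2*(norm(v - z k))\<^sup>2 \<le> \<Phi>"
      using me1 me2 unfolding sub_obj_def u_def v_def by linarith
    moreover have "B \<le> f (x k) + \<psi> (y k)" using B by blast
    ultimately have A: "?s/2*(norm(u - y k))\<^sup>2 + ?s/2*(norm(v - z k))\<^sup>2 \<le> C"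
      unfolding C_def by linarith
    have e1: "?s/2*(norm(u - y k))\<^sup>2 = (norm (lam (Suc k)))\<^sup>2 / (2 * ?s)"
      unfolding uy using sp by (simp add: power2_eq_square field_simps)
    have e2: "?s/2*(norm(v - z k))\<^sup>2 = (norm (gam (Suc k)))\<^sup>2 / (2 * ?s)"
      unfolding vz using sp by (simp add: power2_eq_square field_simps)
    have "(norm (lam (Suc k)))\<^sup>2 / (2 * ?s) \<le> C" "(norm (gam (Suc k)))\<^sup>2 / (2 * ?s) \<le> C"
      using A e1 e2 by (smt (verit) zero_le_power2 divide_nonneg_pos sp)+
    then show ?thesis using sp by (simp add: divide_le_eq mult.commute mult.left_commute)
  qed
  have dbound: "(delta k)\<^sup>2 \<le> 8 * C / sig k" if k2: "k \<ge> 2" for k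
  proof -
    let ?s = "sig k"
    have sp: "?s > 0" by (rule sigpos)
    have k1: "k \<ge> 1" using k2 by simp
    have kk: "Suc (k - 1) = k" using k2 by simp
    have mb1: "(norm (lam (Suc k)))\<^sup>2 \<le> 2 * C * ?s" "(norm (gam (Suc k)))\<^sup>2 \<le> 2 * C * ?s"
      using mult_bd[OF k1] by auto
    have "(norm (lam k))\<^sup>2 \<le> 2 * C * sig (k - 1)" "(norm (gam k))\<^sup>2 \<le> 2 * C * sig (k - 1)"
      using mult_bd[of "k - 1"] k2 kk by auto
    moreover have "sig (k - 1) \<le> ?s" using incS[of "k - 1"] kk by simp
    moreover have "2 * C * sig (k - 1) \<le> 2 * C * ?s" using calculation(3) C0
      by (simp add: mult_left_mono)
    ultimately have mb0: "(norm (lam k))\<^sup>2 \<le> 2 * C * ?s" "(norm (gam k))\<^sup>2 \<le> 2 * C * ?s"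
      by linarith+
    have sq: "(a + b)\<^sup>2 \<le> 4 * D" if "a\<^sup>2 \<le> D" "b\<^sup>2 \<le> D" for a b D :: real
      using that by (smt (verit) power2_sum sum_squares_bound)
    have l1: "lam (Suc k) - lam k = ?s *\<^sub>R (h1 (x k) - y k)"
      and g1: "gam (Suc k) - gam k = ?s *\<^sub>R (h2 (x k) - z k)" using step_iii k1 by auto
    have n1: "?s * norm (h1 (x k) - y k) \<le> norm (lam (Suc k)) + norm (lam k)"
      using norm_triangle_ineq4[of "lam (Suc k)" "lam k"] l1 sp by simp
    have n2: "?s * norm (h2 (x k) - z k) \<le> norm (gam (Suc k)) + norm (gam k)"
      using norm_triangle_ineq4[of "gam (Suc k)" "gam k"] g1 sp by simp
    have "(?s * norm (h1 (x k) - y k))\<^sup>2 \<le> (norm (lam (Suc k)) + norm (lam k))\<^sup>2"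
      using n1 sp by (simp add: power_mono)
    also have "\<dots> \<le> 4 * (2 * C * ?s)" using sq mb1 mb0 by blast
    finally have q1: "?s\<^sup>2 * (norm (h1 (x k) - y k))\<^sup>2 \<le> 8 * C * ?s" by (simp add: power_mult_distrib)
    have "(?s * norm (h2 (x k) - z k))\<^sup>2 \<le> (norm (gam (Suc k)) + norm (gam k))\<^sup>2"
      using n2 sp by (simp add: power_mono)
    also have "\<dots> \<le> 4 * (2 * C * ?s)" using sq mb1 mb0 by blast
    finally have q2: "?s\<^sup>2 * (norm (h2 (x k) - z k))\<^sup>2 \<le> 8 * C * ?s" by (simp add: power_mult_distrib)
    have r1: "(norm (h1 (x k) - y k))\<^sup>2 \<le> 8 * C / ?s"
      using q1 sp by (simp add: le_divide_eq power2_eq_square field_simps)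
    have r2: "(norm (h2 (x k) - z k))\<^sup>2 \<le> 8 * C / ?s"
      using q2 sp by (simp add: le_divide_eq power2_eq_square field_simps)
    show ?thesis using r1 r2 delta_def by (simp add: max_def)
  qed
  have dlim: "delta \<longlonglongrightarrow> 0"
  proof (cases "\<exists>M. \<forall>k. sig k \<le> M")
    case False
    have top: "filterlim sig at_top sequentially"
    proof (subst filterlim_at_top, intro allI)
      fix Z
      obtain N where "Z < sig N" using False by (meson not_le)
      then show "eventually (\<lambda>k. Z \<le> sig k) sequentially"
        using inc unfolding incseq_def
        by (intro eventually_sequentiallyI[of N]) (meson less_imp_le order_trans)
    qed
    have "(\<lambda>k. 8 * C / sig k) \<longlonglongrightarrow> 0"
      by (rule tendsto_divide_0[OF tendsto_const filterlim_at_top_imp_at_infinity[OF top]])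
    then have sl: "(\<lambda>k. sqrt (8 * C / sig k)) \<longlonglongrightarrow> 0"
      using tendsto_real_sqrt by fastforce
    show ?thesis
    proof (rule tendsto_sandwich[OF _ _ tendsto_const sl])
      show "eventually (\<lambda>k. 0 \<le> delta k) sequentially" using dnn by simp
      show "eventually (\<lambda>k. delta k \<le> sqrt (8 * C / sig k)) sequentially"
        using dbound by (intro eventually_sequentiallyI[of 2] real_le_rsqrt) auto
    qed
  next
    case True
    then obtain M where "\<forall>k. sig k \<le> M" by blast
    then obtain L where L: "sig \<longlonglongrightarrow> L" using incseq_convergent[OF inc] by blast
    have "(\<lambda>k. sig (Suc k) - sig k) \<longlonglongrightarrow> L - L"
      by (intro tendsto_diff LIMSEQ_Suc L)
    then have dl: "(\<lambda>k. sig (Suc k) - sig k) \<longlonglongrightarrow> 0" by simp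
    have ep: "(\<rho> - 1) * sig 0 > 0" using rho sig0 by simp
    have "eventually (\<lambda>k. sig (Suc k) - sig k < (\<rho> - 1) * sig 0) sequentially"
      by (rule order_tendstoD(2)[OF dl ep])
    then obtain K0 where K0: "\<forall>k\<ge>K0. sig (Suc k) - sig k < (\<rho> - 1) * sig 0"
      unfolding eventually_sequentially by blast
    define K where "K = Suc K0"
    have contr: "delta k \<le> \<tau> * delta (k - 1)" if "k \<ge> K" for k
    proof (rule ccontr)
      assume nc: "\<not> delta k \<le> \<tau> * delta (k - 1)"
      have k1: "k \<ge> 1" using that unfolding K_def by simp
      have "sig (Suc k) \<ge> \<rho> * sig k" using step_iv k1 nc by auto
      moreover have "sig 0 \<le> sig k" using inc unfolding incseq_def by simp
      moreover have "(\<rho> - 1) * sig 0 \<le> (\<rho> - 1) * sig k" using calculation(2) rho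
        by (simp add: mult_left_mono)
      moreover have "sig (Suc k) - sig k < (\<rho> - 1) * sig 0" using K0 that unfolding K_def by simp
      ultimately show False by (simp add: algebra_simps)
    qed
    have geo: "delta (n + K) \<le> \<tau> ^ n * delta K" for n
    proof (induction n)
      case 0 then show ?case by simp
    next
      case (Suc n)
      have "delta (Suc n + K) \<le> \<tau> * delta (n + K)" using contr[of "Suc n + K"] by simp
      also have "\<dots> \<le> \<tau> * (\<tau> ^ n * delta K)" using Suc.IH tau by (simp add: mult_left_mono)
      finally show ?case by simp
    qed
    have "(\<lambda>n. \<tau> ^ n) \<longlonglongrightarrow> 0" using tau by (intro LIMSEQ_power_zero) simp
    then have "(\<lambda>n. \<tau> ^ n * delta K) \<longlonglongrightarrow> 0 * delta K" by (intro tendsto_mult tendsto_const)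
    then have gl: "(\<lambda>n. \<tau> ^ n * delta K) \<longlonglongrightarrow> 0" by simp
    have "(\<lambda>n. delta (n + K)) \<longlonglongrightarrow> 0"
      by (rule tendsto_sandwich[OF _ _ tendsto_const gl]) (use dnn geo in auto)
    then show ?thesis by (rule LIMSEQ_offset)
  qed
  have part1: "(\<lambda>k. norm (h1 (x k) - y k) + norm (h2 (x k) - z k)) \<longlonglongrightarrow> 0"
  proof (rule tendsto_sandwich[OF _ _ tendsto_const])
    show "(\<lambda>k. 2 * delta k) \<longlonglongrightarrow> 0" using tendsto_mult[OF tendsto_const dlim, of 2] by simp
    show "eventually (\<lambda>k. 0 \<le> norm (h1 (x k) - y k) + norm (h2 (x k) - z k)) sequentially" by simp
    show "eventually (\<lambda>k. norm (h1 (x k) - y k) + norm (h2 (x k) - z k) \<le> 2 * delta k) sequentially"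
      using delta_def by (simp add: max_def)
  qed
  have zin: "z k \<in> Ort" for k
  proof (cases "k = 0")
    case True then show ?thesis using z0 closest_point_in_set[OF clOrt neOrt] unfolding Ort_def by simp
  next
    case False then show ?thesis using step_ii closest_point_in_set[OF clOrt neOrt] unfolding Ort_def
      by (metis One_nat_def Suc_leI neq0_conv)
  qed
  have D1: "(\<lambda>k. h1 (x k) - y k) \<longlonglongrightarrow> 0"
  proof (rule tendsto_norm_zero_cancel, rule tendsto_sandwich[OF _ _ tendsto_const part1])
    show "eventually (\<lambda>k. 0 \<le> norm (h1 (x k) - y k)) sequentially" by simp
    show "eventually (\<lambda>k. norm (h1 (x k) - y k) \<le> norm (h1 (x k) - y k) + norm (h2 (x k) - z k)) sequentially" by simp
  qed
  have D2: "(\<lambda>k. h2 (x k) - z k) \<longlonglongrightarrow> 0"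
  proof (rule tendsto_norm_zero_cancel, rule tendsto_sandwich[OF _ _ tendsto_const part1])
    show "eventually (\<lambda>k. 0 \<le> norm (h2 (x k) - z k)) sequentially" by simp
    show "eventually (\<lambda>k. norm (h2 (x k) - z k) \<le> norm (h1 (x k) - y k) + norm (h2 (x k) - z k)) sequentially" by simp
  qed
  have part2: "acc_point (\<lambda>k. (x k, y k, z k)) (xs, h1 xs, h2 xs) \<and> h2 xs \<in> nonpos_orthant"
    if acc: "acc_point x xs" for xs
  proof -
    obtain r where r: "strict_mono r" and xr: "(\<lambda>k. x (r k)) \<longlonglongrightarrow> xs"
      using acc unfolding acc_point_def comp_def by blast
    have h1r: "(\<lambda>k. h1 (x (r k))) \<longlonglongrightarrow> h1 xs"
      by (rule continuous_on_tendsto_compose[OF cont_h1 xr]) auto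
    have h2r: "(\<lambda>k. h2 (x (r k))) \<longlonglongrightarrow> h2 xs"
      by (rule continuous_on_tendsto_compose[OF cont_h2 xr]) auto
    have d1r: "(\<lambda>k. h1 (x (r k)) - y (r k)) \<longlonglongrightarrow> 0"
      using LIMSEQ_subseq_LIMSEQ[OF D1 r] by (simp add: comp_def)
    have d2r: "(\<lambda>k. h2 (x (r k)) - z (r k)) \<longlonglongrightarrow> 0"
      using LIMSEQ_subseq_LIMSEQ[OF D2 r] by (simp add: comp_def)
    have yr: "(\<lambda>k. y (r k)) \<longlonglongrightarrow> h1 xs"
      using tendsto_diff[OF h1r d1r] by simp
    have zr: "(\<lambda>k. z (r k)) \<longlonglongrightarrow> h2 xs"
      using tendsto_diff[OF h2r d2r] by simp
    have "((\<lambda>k. (x k, y k, z k)) \<circ> r) \<longlonglongrightarrow> (xs, h1 xs, h2 xs)"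
      unfolding comp_def by (intro tendsto_Pair xr yr zr)
    then have "acc_point (\<lambda>k. (x k, y k, z k)) (xs, h1 xs, h2 xs)"
      unfolding acc_point_def using r by blast
    moreover have "h2 xs \<in> Ort"
      by (rule closed_sequentially[OF clOrt _ zr]) (use zin in auto)
    ultimately show ?thesis unfolding Ort_def by simp
  qed
  have part3: "\<exists>xs. acc_point x xs" if "compact (UNIV :: 'a set)"
    using that unfolding compact_def acc_point_def by blast
  show ?thesis using part1 part2 part3 by blast
qed

end
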